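(* Let $f=\frac1n\sum_{i=1}^nf_i$ with $x^*$ a minimizer, $\mathbf W\succ0$, and let $\theta_{\mathbf S}$ satisfy $\mathbb{E}_{\mathcal D}[\theta_{\mathbf S}\Pi_{\mathbf S}e]=e$. Assume there is $\mathcal L_1>0$ with $\mathbb{E}_{\mathcal D}\|\nabla f_{\mathbf S}(x)-\nabla f_{\mathbf S}(x^* )\|_2^2\le2\mathcal L_1(f(x)-f(x^* ))$ for all $x$. Then the JacSketch gradient estimate satisfies $$\mathbb{E}_{\mathcal D}\|g^k\|_2^2\le4\mathcal L_1(f(x^k)-f(x^* ))+\frac{2\rho}{n^2}\|\mathbf J^k-\mathbf G(x^* )\|_{\mathbf W^{-1}}^2,$$ with expectation over $\mathbf S_k$ conditional on $x^k,\mathbf J^k$.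
   Context: $\mathbf G(x)=[\nabla f_1(x),\dots,\nabla f_n(x)]$, $F(x)=(f_1(x),\dots,f_n(x))^\top$, $e$ all-ones, $\Pi_{\mathbf S}=\mathbf S(\mathbf S^\top\mathbf W\mathbf S)^\dagger\mathbf S^\top\mathbf W$, $\nabla f_{\mathbf S}(x)=\frac{\theta_{\mathbf S}}n\mathbf G(x)\Pi_{\mathbf S}e$, $\|\mathbf X\|_{\mathbf W^{-1}}^2=\mathrm{Tr}(\mathbf X\mathbf W^{-1}\mathbf X^\top)$, $\rho=\lambda_{\max}\big(\mathbf W^{1/2}(\mathbb{E}_{\mathcal D}[\theta_{\mathbf S}^2\Pi_{\mathbf S}ee^\top\Pi_{\mathbf S}^\top]-ee^\top)\mathbf W^{1/2}\big)$. JacSketch gradient estimate: $g^k=\frac1n\mathbf J^ke+\frac{\theta_{\mathbf S_k}}n(\mathbf G(x^k)-\mathbf J^k)\Pi_{\mathbf S_k}e$ with $\mathbf S_k\sim\mathcal D$ and $\mathbf J^k\in\mathbb{R}^{d\times n}$ the current Jacobian estimate. *)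

theory Defs
  imports "HOL-Analysis.Analysis" "HOL-Probability.Probability"
begin

definition pinv :: "real^'b^'a \<Rightarrow> real^'a^'b" where
  "pinv A = (THE X. A ** X ** A = A \<and> X ** A ** X = X \<and>
       transpose (A ** X) = A ** X \<and> transpose (X ** A) = X ** A)"

definition sketch_proj :: "real^'n^'n \<Rightarrow> real^'q^'n \<Rightarrow> real^'n^'n" where
  "sketch_proj W S = S ** pinv (transpose S ** W ** S) ** transpose S ** W"

definition ones :: "real^'n" where "ones = (\<chi> i. 1)"

definition outer :: "real^'n \<Rightarrow> real^'m \<Rightarrow> real^'m^'n" where
  "outer u v = (\<chi> i j. u $ i * v $ j)"

definition jac :: "('n \<Rightarrow> real^'d \<Rightarrow> real^'d) \<Rightarrow> real^'d \<Rightarrow> real^'n^'d" where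
  "jac gradf x = (\<chi> a i. gradf i x $ a)"

definition favg :: "('n::finite \<Rightarrow> real^'d \<Rightarrow> real) \<Rightarrow> real^'d \<Rightarrow> real" where
  "favg fs x = (\<Sum>i\<in>UNIV. fs i x) / real CARD('n)"

definition grad_sketch ::
  "('n::finite \<Rightarrow> real^'d \<Rightarrow> real^'d) \<Rightarrow> real^'n^'n \<Rightarrow> real \<Rightarrow> real^'q^'n \<Rightarrow> real^'d \<Rightarrow> real^'d" where
  "grad_sketch gradf W th S x =
     (th / real CARD('n)) *\<^sub>R (jac gradf x *v (sketch_proj W S *v ones))"

definition pos_def :: "real^'n^'n \<Rightarrow> bool" where
  "pos_def W \<longleftrightarrow> transpose W = W \<and> (\<forall>v. v \<noteq> 0 \<longrightarrow> v \<bullet> (W *v v) > 0)"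

definition mat_sqrt :: "real^'n^'n \<Rightarrow> real^'n^'n" where
  "mat_sqrt W = (THE R. transpose R = R \<and> (\<forall>v. v \<bullet> (R *v v) \<ge> 0) \<and> R ** R = W)"

definition lambda_max :: "real^'n^'n \<Rightarrow> real" where
  "lambda_max A = Max {l. \<exists>v. v \<noteq> 0 \<and> A *v v = l *\<^sub>R v}"

definition wnorm_sq :: "real^'n^'d \<Rightarrow> real^'n^'n \<Rightarrow> real" where
  "wnorm_sq X W = trace (X ** matrix_inv W ** transpose X)"

definition rho :: "'s measure \<Rightarrow> real^'n^'n \<Rightarrow> ('s \<Rightarrow> real) \<Rightarrow> ('s \<Rightarrow> real^'q^'n) \<Rightarrow> real" where
  "rho D W th S = lambda_max (mat_sqrt W **
      ((\<integral>s. outer (th s *\<^sub>R (sketch_proj W (S s) *v ones))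
                      (th s *\<^sub>R (sketch_proj W (S s) *v ones)) \<partial>D) - outer ones ones)
      ** mat_sqrt W)"

end

theory Submission
  imports Defs
begin

lemma sym_dot:
  fixes A :: "real^'n^'n"
  assumes "transpose A = A"
  shows "x \<bullet> (A *v y) = (A *v x) \<bullet> y"
  by (metis assms dot_lmul_matrix transpose_matrix_vector)

lemma small_le:
  fixes a c :: real
  assumes "\<And>t. t > 0 \<Longrightarrow> a \<le> t * c"
  shows "a \<le> 0"
proof (rule ccontr)
  assume a: "\<not> a \<le> 0"
  show False
  proof (cases "c \<le> 0")
    case True
    then show False using assms[of 1] a by simp
  next
    case False
    then have "a \<le> (a / (2*c)) * c" using assms[of "a/(2*c)"] a by simp
    also have "\<dots> = a / 2" using False by simp
    finally show False using a by simp
  qed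
qed

lemma dot_le0:
  fixes y :: "'a::real_inner"
  shows "y \<bullet> y \<le> 0 \<Longrightarrow> y = 0"
  by (metis inner_eq_zero_iff inner_ge_zero antisym)

lemma psd_zero:
  fixes R :: "real^'n^'n"
  assumes sym: "transpose R = R" and psd: "\<And>v. 0 \<le> v \<bullet> (R *v v)"
    and x: "x \<bullet> (R *v x) = 0"
  shows "R *v x = 0"
proof -
  define y where "y = R *v x"
  have "y \<bullet> y \<le> 0"
  proof (rule small_le[of _ "(y \<bullet> (R *v y)) / 2"])
    fix t :: real assume t: "t > 0"
    have "0 \<le> (x - t *\<^sub>R y) \<bullet> (R *v (x - t *\<^sub>R y))" by (rule psd)
    also have "\<dots> = x \<bullet> (R *v x) - t * (x \<bullet> (R *v y)) - t * (y \<bullet> (R *v x)) + t * t * (y \<bullet> (R *v y))"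
      by (simp add: matrix_vector_mult_diff_distrib matrix_vector_mult_scaleR inner_diff_left inner_diff_right algebra_simps)
    also have "x \<bullet> (R *v y) = y \<bullet> y" using sym_dot[OF sym, of x y] y_def by simp
    also have "y \<bullet> (R *v x) = y \<bullet> y" using y_def by simp
    finally have "2 * t * (y \<bullet> y) \<le> t * (t * (y \<bullet> (R *v y)))" using x by (simp add: algebra_simps)
    then have "2 * (y \<bullet> y) \<le> t * (y \<bullet> (R *v y))" using t by simp
    then show "y \<bullet> y \<le> t * ((y \<bullet> (R *v y)) / 2)" by simp
  qed
  then show ?thesis using y_def dot_le0 by simp
qed

lemma rayleigh_sub:
  fixes A :: "real^'n^'n"
  assumes sym: "transpose A = A" and V: "subspace V" and inv: "\<And>x. x \<in> V \<Longrightarrow> A *v x \<in> V"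
    and ne: "V \<noteq> {0}"
  shows "\<exists>u\<in>V. norm u = 1 \<and> A *v u = (u \<bullet> (A *v u)) *\<^sub>R u \<and>
           (\<forall>x\<in>V. x \<bullet> (A *v x) \<le> (u \<bullet> (A *v u)) * (x \<bullet> x))"
proof -
  define K where "K = V \<inter> sphere 0 1"
  have "compact K" unfolding K_def by (intro closed_Int_compact closed_subspace V compact_sphere)
  obtain z where z: "z \<in> V" "z \<noteq> 0" using ne V subspace_0 by blast
  have "z /\<^sub>R norm z \<in> K" unfolding K_def using z V by (simp add: subspace_scale)
  then have "K \<noteq> {}" by blast
  moreover have "continuous_on K (\<lambda>x. x \<bullet> (A *v x))"
    by (intro continuous_intros linear_continuous_on matrix_vector_mul_bounded_linear)
  ultimately obtain u where u: "u \<in> K" and umax: "\<And>y. y \<in> K \<Longrightarrow> y \<bullet> (A *v y) \<le> u \<bullet> (A *v u)"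
    using continuous_attains_sup[OF \<open>compact K\<close>] by blast
  define l where "l = u \<bullet> (A *v u)"
  have uV: "u \<in> V" and nu: "norm u = 1" using u unfolding K_def by auto
  have uu: "u \<bullet> u = 1" using nu by (simp add: dot_square_norm)
  have bound: "x \<bullet> (A *v x) \<le> l * (x \<bullet> x)" if x: "x \<in> V" for x
  proof (cases "x = 0")
    case True then show ?thesis by simp
  next
    case False
    have "x /\<^sub>R norm x \<in> K" unfolding K_def using x False V by (simp add: subspace_scale)
    then have "(x /\<^sub>R norm x) \<bullet> (A *v (x /\<^sub>R norm x)) \<le> l" using umax l_def by blast
    then have "(x \<bullet> (A *v x)) / (norm x)^2 \<le> l"
      by (simp add: matrix_vector_mult_scaleR power2_eq_square divide_inverse mult_ac)
    then have "x \<bullet> (A *v x) \<le> l * (norm x)^2" using False by (simp add: divide_le_eq)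
    then show ?thesis by (simp add: dot_square_norm)
  qed
  define w where "w = A *v u - l *\<^sub>R u"
  have wV: "w \<in> V" unfolding w_def using uV inv V by (simp add: subspace_diff subspace_scale)
  have uw: "u \<bullet> w = 0" unfolding w_def l_def using uu by (simp add: inner_diff_right)
  have wAu: "w \<bullet> (A *v u) = w \<bullet> w"
  proof -
    have "A *v u = w + l *\<^sub>R u" unfolding w_def by simp
    then show ?thesis using uw by (simp add: inner_add_right inner_commute)
  qed
  have "w \<bullet> w \<le> 0"
  proof (rule small_le[of _ "(l * (w \<bullet> w) - w \<bullet> (A *v w)) / 2"])
    fix t :: real assume t: "t > 0"
    have "u + t *\<^sub>R w \<in> V" using uV wV V by (simp add: subspace_add subspace_scale)
    then have bnd: "(u + t *\<^sub>R w) \<bullet> (A *v (u + t *\<^sub>R w)) \<le> l * ((u + t *\<^sub>R w) \<bullet> (u + t *\<^sub>R w))"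
      by (rule bound)
    have exp: "(u + t *\<^sub>R w) \<bullet> (A *v (u + t *\<^sub>R w)) =
        u \<bullet> (A *v u) + t * (u \<bullet> (A *v w)) + t * (w \<bullet> (A *v u)) + t * t * (w \<bullet> (A *v w))"
      by (simp add: matrix_vector_right_distrib matrix_vector_mult_scaleR inner_add_left inner_add_right algebra_simps)
    have uAw: "u \<bullet> (A *v w) = w \<bullet> (A *v u)" using sym_dot[OF sym, of u w] by (simp add: inner_commute)
    have nrm: "(u + t *\<^sub>R w) \<bullet> (u + t *\<^sub>R w) = 1 + t * t * (w \<bullet> w)"
      using uu uw by (simp add: inner_add_left inner_add_right inner_commute algebra_simps)
    have e1: "(u + t *\<^sub>R w) \<bullet> (A *v (u + t *\<^sub>R w)) = l + 2 * t * (w \<bullet> w) + t * t * (w \<bullet> (A *v w))"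
      unfolding exp uAw wAu l_def by simp
    have "l + 2 * t * (w \<bullet> w) + t * t * (w \<bullet> (A *v w)) \<le> l * (1 + t * t * (w \<bullet> w))"
      using bnd unfolding e1 nrm .
    then have "t * (2 * (w \<bullet> w)) \<le> t * (t * (l * (w \<bullet> w) - w \<bullet> (A *v w)))"
      by (simp add: algebra_simps)
    then have "2 * (w \<bullet> w) \<le> t * (l * (w \<bullet> w) - w \<bullet> (A *v w))" using t by simp
    then show "w \<bullet> w \<le> t * ((l * (w \<bullet> w) - w \<bullet> (A *v w)) / 2)" by simp
  qed
  then have "w = 0" by (rule dot_le0)
  then have "A *v u = l *\<^sub>R u" unfolding w_def by simp
  then show ?thesis using uV nu bound l_def by blast
qed

lemma orth_sum_coeff:
  fixes B :: "(real^'n) set"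
  assumes fin: "finite B" and c: "c \<in> B" and nc: "norm c = 1"
    and orth: "\<And>b. b \<in> B \<Longrightarrow> b \<noteq> c \<Longrightarrow> c \<bullet> b = 0"
  shows "c \<bullet> (\<Sum>b\<in>B. k b *\<^sub>R b) = k c"
proof -
  have "c \<bullet> (\<Sum>b\<in>B. k b *\<^sub>R b) = (\<Sum>b\<in>B. k b * (c \<bullet> b))"
    by (simp add: inner_sum_right)
  also have "\<dots> = k c * (c \<bullet> c) + (\<Sum>b\<in>B - {c}. k b * (c \<bullet> b))"
    using fin c by (simp add: sum.remove)
  also have "(\<Sum>b\<in>B - {c}. k b * (c \<bullet> b)) = 0" using orth by (intro sum.neutral) auto
  also have "c \<bullet> c = 1" using nc by (simp add: dot_square_norm)
  finally show ?thesis by simp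
qed

lemma spectral_sub:
  fixes A :: "real^'n^'n"
  assumes sym: "transpose A = A"
  shows "subspace V \<Longrightarrow> (\<forall>x\<in>V. A *v x \<in> V) \<Longrightarrow>
    \<exists>B. finite B \<and> B \<subseteq> V \<and> (\<forall>b\<in>B. norm b = 1 \<and> A *v b = (b \<bullet> (A *v b)) *\<^sub>R b) \<and>
        (\<forall>b\<in>B. \<forall>c\<in>B. b \<noteq> c \<longrightarrow> b \<bullet> c = 0) \<and> (\<forall>x\<in>V. x = (\<Sum>b\<in>B. (b \<bullet> x) *\<^sub>R b))"
proof (induction "dim V" arbitrary: V rule: less_induct)
  case less
  note V = less.prems(1) and inv = less.prems(2)
  show ?case
  proof (cases "V = {0}")
    case True
    then show ?thesis by (intro exI[of _ "{}"]) auto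
  next
    case False
    obtain u where uV: "u \<in> V" and nu: "norm u = 1" and eig: "A *v u = (u \<bullet> (A *v u)) *\<^sub>R u"
      using rayleigh_sub[OF sym V _ False] inv by blast
    have uu: "u \<bullet> u = 1" using nu by (simp add: dot_square_norm)
    define V' where "V' = V \<inter> {x. u \<bullet> x = 0}"
    have hyp: "subspace {x. u \<bullet> x = 0}" by (auto simp: subspace_def inner_add_right)
    have V': "subspace V'" unfolding V'_def using subspace_inter[OF V hyp] .
    have sub: "V' \<subseteq> V" unfolding V'_def by auto
    have neq: "V' \<noteq> V"
    proof
      assume "V' = V"
      then have "u \<in> V'" using uV by simp
      then show False using uu unfolding V'_def by simp
    qed
    have "dim V' < dim V"
    proof -
      have "dim V' \<le> dim V" using sub by (rule dim_subset)
      moreover have "\<not> dim V \<le> dim V'" using subspace_dim_equal[OF V' V sub] neq by blast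
      ultimately show ?thesis by simp
    qed
    moreover have inv': "\<forall>x\<in>V'. A *v x \<in> V'"
    proof
      fix x assume x: "x \<in> V'"
      have "u \<bullet> (A *v x) = (A *v u) \<bullet> x" by (rule sym_dot[OF sym])
      also have "\<dots> = 0" using x eig unfolding V'_def by (metis (mono_tags) IntD2 inner_scaleR_left mem_Collect_eq mult_zero_right)
      finally show "A *v x \<in> V'" using x inv unfolding V'_def by auto
    qed
    ultimately obtain B where B: "finite B" "B \<subseteq> V'"
      "\<forall>b\<in>B. norm b = 1 \<and> A *v b = (b \<bullet> (A *v b)) *\<^sub>R b"
      "\<forall>b\<in>B. \<forall>c\<in>B. b \<noteq> c \<longrightarrow> b \<bullet> c = 0" "\<forall>x\<in>V'. x = (\<Sum>b\<in>B. (b \<bullet> x) *\<^sub>R b)"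
      using less.hyps[OF _ V'] by blast
    have uB: "u \<notin> B" using B(2) uu unfolding V'_def by auto
    have Bu: "\<And>b. b \<in> B \<Longrightarrow> u \<bullet> b = 0" using B(2) unfolding V'_def by auto
    show ?thesis
    proof (intro exI[of _ "insert u B"] conjI)
      show "finite (insert u B)" using B(1) by simp
      show "insert u B \<subseteq> V" using uV B(2) sub by auto
      show "\<forall>b\<in>insert u B. norm b = 1 \<and> A *v b = (b \<bullet> (A *v b)) *\<^sub>R b" using B(3) nu eig by auto
      show "\<forall>b\<in>insert u B. \<forall>c\<in>insert u B. b \<noteq> c \<longrightarrow> b \<bullet> c = 0"
        using B(4) Bu by (auto simp: inner_commute)
      show "\<forall>x\<in>V. x = (\<Sum>b\<in>insert u B. (b \<bullet> x) *\<^sub>R b)"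
      proof
        fix x assume x: "x \<in> V"
        define y where "y = x - (u \<bullet> x) *\<^sub>R u"
        have yV: "y \<in> V'" unfolding V'_def y_def using x uV V uu
          by (auto simp: subspace_diff subspace_scale inner_diff_right)
        have byx: "b \<bullet> y = b \<bullet> x" if "b \<in> B" for b
          using Bu[OF that] unfolding y_def by (simp add: inner_diff_right inner_commute)
        have "y = (\<Sum>b\<in>B. (b \<bullet> y) *\<^sub>R b)" using B(5) yV by blast
        also have "\<dots> = (\<Sum>b\<in>B. (b \<bullet> x) *\<^sub>R b)" using byx by (intro sum.cong) auto
        finally have "x = (u \<bullet> x) *\<^sub>R u + (\<Sum>b\<in>B. (b \<bullet> x) *\<^sub>R b)" unfolding y_def by (simp add: algebra_simps)
        then show "x = (\<Sum>b\<in>insert u B. (b \<bullet> x) *\<^sub>R b)" using B(1) uB by simp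
      qed
    qed
  qed
qed

lemma spectral:
  fixes A :: "real^'n^'n"
  assumes sym: "transpose A = A"
  obtains B where "finite B" "\<And>b. b \<in> B \<Longrightarrow> norm b = 1" "\<And>b. b \<in> B \<Longrightarrow> A *v b = (b \<bullet> (A *v b)) *\<^sub>R b"
    "\<And>b c. b \<in> B \<Longrightarrow> c \<in> B \<Longrightarrow> b \<noteq> c \<Longrightarrow> b \<bullet> c = 0" "\<And>x. x = (\<Sum>b\<in>B. (b \<bullet> x) *\<^sub>R b)"
  using spectral_sub[OF sym, of UNIV] by auto

lemma eig_finite:
  fixes A :: "real^'n^'n"
  assumes sym: "transpose A = A"
  shows "finite {l. \<exists>v. v \<noteq> 0 \<and> A *v v = l *\<^sub>R v}"
proof -
  obtain B where B: "finite B" "\<And>b. b \<in> B \<Longrightarrow> norm b = 1" "\<And>b. b \<in> B \<Longrightarrow> A *v b = (b \<bullet> (A *v b)) *\<^sub>R b"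
    "\<And>b c. b \<in> B \<Longrightarrow> c \<in> B \<Longrightarrow> b \<noteq> c \<Longrightarrow> b \<bullet> c = 0" "\<And>x. x = (\<Sum>b\<in>B. (b \<bullet> x) *\<^sub>R b)"
    using spectral[OF sym] by blast
  have "{l. \<exists>v. v \<noteq> 0 \<and> A *v v = l *\<^sub>R v} \<subseteq> (\<lambda>b. b \<bullet> (A *v b)) ` B"
  proof
    fix l assume "l \<in> {l. \<exists>v. v \<noteq> 0 \<and> A *v v = l *\<^sub>R v}"
    then obtain v where v: "v \<noteq> 0" "A *v v = l *\<^sub>R v" by blast
    have "\<exists>b\<in>B. b \<bullet> v \<noteq> 0"
    proof (rule ccontr)
      assume "\<not> ?thesis"
      then have "(\<Sum>b\<in>B. (b \<bullet> v) *\<^sub>R b) = 0" by simp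
      then show False using B(5)[of v] v by simp
    qed
    then obtain b where b: "b \<in> B" "b \<bullet> v \<noteq> 0" by blast
    have "l * (b \<bullet> v) = b \<bullet> (A *v v)" using v by simp
    also have "\<dots> = (A *v b) \<bullet> v" by (rule sym_dot[OF sym])
    also have "\<dots> = (b \<bullet> (A *v b)) * (b \<bullet> v)" using B(3)[OF b(1)] by (metis inner_scaleR_left)
    finally have "l = b \<bullet> (A *v b)" using b(2) by simp
    then show "l \<in> (\<lambda>b. b \<bullet> (A *v b)) ` B" using b(1) by blast
  qed
  then show ?thesis using B(1) finite_subset by blast
qed

lemma lmax_bound:
  fixes A :: "real^'n^'n"
  assumes sym: "transpose A = A"
  shows "x \<bullet> (A *v x) \<le> lambda_max A * (x \<bullet> x)"
proof -
  have ne: "(UNIV :: (real^'n) set) \<noteq> {0}"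
  proof
    assume "(UNIV :: (real^'n) set) = {0}"
    then have "(ones :: real^'n) = 0" by blast
    then show False by (simp add: ones_def vec_eq_iff)
  qed
  obtain u where u: "norm u = 1" "A *v u = (u \<bullet> (A *v u)) *\<^sub>R u"
    and bd: "\<forall>x. x \<bullet> (A *v x) \<le> (u \<bullet> (A *v u)) * (x \<bullet> x)"
    using rayleigh_sub[OF sym subspace_UNIV _ ne] by auto
  have "u \<noteq> 0" using u by auto
  then have "u \<bullet> (A *v u) \<in> {l. \<exists>v. v \<noteq> 0 \<and> A *v v = l *\<^sub>R v}" using u by blast
  then have "u \<bullet> (A *v u) \<le> lambda_max A" unfolding lambda_max_def
    using eig_finite[OF sym] by (rule Max_ge[rotated])
  then have "(u \<bullet> (A *v u)) * (x \<bullet> x) \<le> lambda_max A * (x \<bullet> x)"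
    by (intro mult_right_mono) auto
  then show ?thesis using bd by (meson order_trans)
qed

lemma sqrt_exists:
  fixes W :: "real^'n^'n"
  assumes W: "pos_def W"
  shows "\<exists>R. transpose R = R \<and> (\<forall>v. v \<bullet> (R *v v) \<ge> 0) \<and> R ** R = W"
proof -
  have sym: "transpose W = W" using W unfolding pos_def_def by simp
  obtain B where B: "finite B" "\<And>b. b \<in> B \<Longrightarrow> norm b = 1" "\<And>b. b \<in> B \<Longrightarrow> W *v b = (b \<bullet> (W *v b)) *\<^sub>R b"
    "\<And>b c. b \<in> B \<Longrightarrow> c \<in> B \<Longrightarrow> b \<noteq> c \<Longrightarrow> b \<bullet> c = 0" "\<And>x. x = (\<Sum>b\<in>B. (b \<bullet> x) *\<^sub>R b)"
    using spectral[OF sym] by blast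
  define lam where "lam b = b \<bullet> (W *v b)" for b
  have lpos: "lam b \<ge> 0" if "b \<in> B" for b
  proof -
    have "b \<noteq> 0" using B(2)[OF that] by auto
    then show ?thesis using W unfolding pos_def_def lam_def by (simp add: less_imp_le)
  qed
  define R :: "real^'n^'n" where "R = (\<Sum>b\<in>B. sqrt (lam b) *\<^sub>R outer b b)"
  have outer_mv: "outer b b *v x = (b \<bullet> x) *\<^sub>R b" for b x :: "real^'n"
    by (simp add: vec_eq_iff matrix_vector_mult_def outer_def inner_vec_def sum_distrib_left mult_ac)
  have Rv: "R *v x = (\<Sum>b\<in>B. (sqrt (lam b) * (b \<bullet> x)) *\<^sub>R b)" for x
  proof -
    have "R *v x = (\<Sum>b\<in>B. (sqrt (lam b) *\<^sub>R outer b b) *v x)"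
      unfolding R_def using B(1) by (induction B rule: finite_induct) (simp_all add: matrix_vector_mult_add_rdistrib)
    also have "\<dots> = (\<Sum>b\<in>B. (sqrt (lam b) * (b \<bullet> x)) *\<^sub>R b)"
      by (intro sum.cong) (auto simp: outer_mv scaleR_matrix_vector_assoc[symmetric])
    finally show ?thesis .
  qed
  have Rc: "R $ i $ j = (\<Sum>b\<in>B. sqrt (lam b) * (b $ i * b $ j))" for i j
    unfolding R_def by (simp add: sum_component outer_def)
  have "transpose R = R"
    unfolding vec_eq_iff transpose_def by (simp add: Rc mult.commute)
  moreover have "\<forall>v. v \<bullet> (R *v v) \<ge> 0"
  proof
    fix v :: "real^'n"
    have "v \<bullet> (R *v v) = (\<Sum>b\<in>B. sqrt (lam b) * (b \<bullet> v)^2)"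
      by (simp add: Rv inner_sum_right inner_commute[of _ v] power2_eq_square mult_ac)
    also have "\<dots> \<ge> 0" using lpos by (intro sum_nonneg mult_nonneg_nonneg) auto
    finally show "v \<bullet> (R *v v) \<ge> 0" .
  qed
  moreover have "R ** R = W"
  proof (rule matrix_eq[THEN iffD2], rule allI)
    fix x :: "real^'n"
    have "(R ** R) *v x = R *v (R *v x)" by (simp add: matrix_vector_mul_assoc)
    also have "\<dots> = (\<Sum>c\<in>B. (sqrt (lam c) * (c \<bullet> (R *v x))) *\<^sub>R c)" by (rule Rv)
    also have "\<dots> = (\<Sum>c\<in>B. (lam c * (c \<bullet> x)) *\<^sub>R c)"
    proof (intro sum.cong refl)
      fix c assume c: "c \<in> B"
      have "c \<bullet> (R *v x) = sqrt (lam c) * (c \<bullet> x)"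
        unfolding Rv by (rule orth_sum_coeff[OF B(1) c B(2)[OF c]]) (use B(4) c in auto)
      then show "(sqrt (lam c) * (c \<bullet> (R *v x))) *\<^sub>R c = (lam c * (c \<bullet> x)) *\<^sub>R c"
        using lpos[OF c] by (simp add: mult.assoc[symmetric])
    qed
    also have "\<dots> = W *v (\<Sum>b\<in>B. (b \<bullet> x) *\<^sub>R b)"
      unfolding vec.sum matrix_vector_mult_scaleR lam_def
      by (intro sum.cong refl) (subst B(3), auto)
    also have "\<dots> = W *v x" using B(5)[of x] by simp
    finally show "(R ** R) *v x = W *v x" .
  qed
  ultimately show ?thesis by blast
qed

lemma sqrt_unique:
  fixes R1 R2 :: "real^'n^'n"
  assumes s1: "transpose R1 = R1" and p1: "\<forall>v. v \<bullet> (R1 *v v) \<ge> 0"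
    and s2: "transpose R2 = R2" and p2: "\<forall>v. v \<bullet> (R2 *v v) \<ge> 0"
    and eq: "R1 ** R1 = R2 ** R2"
  shows "R1 = R2"
proof -
  define D where "D = R1 - R2"
  have symD: "transpose D = D" unfolding D_def using s1 s2
    by (simp add: vec_eq_iff transpose_def)
  have key: "R1 *v (D *v x) + R2 *v (D *v x) + D *v (R1 *v x) + D *v (R2 *v x) = 0" for x
  proof -
    have "R1 *v (R1 *v x) = R2 *v (R2 *v x)" using eq by (simp add: matrix_vector_mul_assoc)
    then show ?thesis unfolding D_def
      by (simp add: matrix_vector_mult_diff_rdistrib matrix_vector_mult_diff_distrib algebra_simps)
  qed
  obtain B where B: "finite B" "\<And>b. b \<in> B \<Longrightarrow> norm b = 1" "\<And>b. b \<in> B \<Longrightarrow> D *v b = (b \<bullet> (D *v b)) *\<^sub>R b"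
    "\<And>b c. b \<in> B \<Longrightarrow> c \<in> B \<Longrightarrow> b \<noteq> c \<Longrightarrow> b \<bullet> c = 0" "\<And>x. x = (\<Sum>b\<in>B. (b \<bullet> x) *\<^sub>R b)"
    using spectral[OF symD] by blast
  have Db: "D *v b = 0" if b: "b \<in> B" for b
  proof (cases "b \<bullet> (D *v b) = 0")
    case True then show ?thesis using B(3)[OF b] by simp
  next
    case False
    define m where "m = b \<bullet> (D *v b)"
    have Dbm: "D *v b = m *\<^sub>R b" using B(3)[OF b] m_def by simp
    have "0 = b \<bullet> (R1 *v (D *v b) + R2 *v (D *v b) + D *v (R1 *v b) + D *v (R2 *v b))"
      using key[of b] by simp
    also have "\<dots> = m * (b \<bullet> (R1 *v b)) + m * (b \<bullet> (R2 *v b)) + (D *v b) \<bullet> (R1 *v b) + (D *v b) \<bullet> (R2 *v b)"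
      by (simp add: inner_add_right Dbm matrix_vector_mult_scaleR sym_dot[OF symD, of b])
    also have "\<dots> = 2 * m * (b \<bullet> (R1 *v b) + b \<bullet> (R2 *v b))"
      by (simp add: Dbm algebra_simps)
    finally have "b \<bullet> (R1 *v b) + b \<bullet> (R2 *v b) = 0" using False m_def by simp
    moreover have "b \<bullet> (R1 *v b) \<ge> 0" "b \<bullet> (R2 *v b) \<ge> 0" using p1 p2 by auto
    ultimately have "b \<bullet> (R1 *v b) = 0" "b \<bullet> (R2 *v b) = 0" by linarith+
    then have "R1 *v b = 0" "R2 *v b = 0"
      using psd_zero[OF s1] psd_zero[OF s2] p1 p2 by blast+
    then show ?thesis unfolding D_def by (simp add: matrix_vector_mult_diff_rdistrib)
  qed
  have "D *v x = 0" for x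
  proof -
    have "D *v x = D *v (\<Sum>b\<in>B. (b \<bullet> x) *\<^sub>R b)" using B(5)[of x] by simp
    also have "\<dots> = 0" by (simp add: vec.sum matrix_vector_mult_scaleR Db)
    finally show ?thesis .
  qed
  then show ?thesis unfolding D_def
    by (simp add: matrix_eq matrix_vector_mult_diff_rdistrib)
qed

lemma mat_sqrt_props:
  fixes W :: "real^'n^'n"
  assumes W: "pos_def W"
  shows "transpose (mat_sqrt W) = mat_sqrt W \<and> mat_sqrt W ** mat_sqrt W = W"
proof -
  have "\<exists>!R. transpose R = R \<and> (\<forall>v. v \<bullet> (R *v v) \<ge> 0) \<and> R ** R = W"
    using sqrt_exists[OF W] sqrt_unique by metis
  from theI'[OF this] show ?thesis unfolding mat_sqrt_def by blast
qed

lemma int_blin: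
  assumes "bounded_linear T" "integrable M f"
  shows "integral\<^sup>L M (\<lambda>x. T (f x)) = T (integral\<^sup>L M f)"
  using has_bochner_integral_bounded_linear[OF assms(1) has_bochner_integral_integrable[OF assms(2)]]
  by (rule has_bochner_integral_integral_eq)

lemma sq_add_le:
  fixes a b :: real
  shows "(a + b)^2 \<le> 2 * a^2 + 2 * b^2"
proof -
  have "0 \<le> (a - b)^2" by simp
  then show ?thesis by (simp add: power2_eq_square algebra_simps)
qed

lemma norm_add_sq:
  fixes a b :: "'a::real_normed_vector"
  shows "(norm (a + b))^2 \<le> 2 * (norm a)^2 + 2 * (norm b)^2"
proof -
  have "(norm (a + b))^2 \<le> (norm a + norm b)^2"
    by (intro power_mono norm_triangle_ineq) simp
  also have "\<dots> \<le> 2 * (norm a)^2 + 2 * (norm b)^2" by (rule sq_add_le)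
  finally show ?thesis .
qed

lemma int_sq:
  fixes v :: "'s \<Rightarrow> 'a::euclidean_space" and T :: "'a \<Rightarrow> 'b::euclidean_space"
  assumes D: "prob_space D" and meas: "v \<in> borel_measurable D"
    and int: "integrable D (\<lambda>s. (norm (v s))^2)" and T: "bounded_linear T"
  shows "integrable D (\<lambda>s. (norm (c + T (v s)))^2)"
proof -
  interpret prob_space D by (rule D)
  obtain K where K: "K \<ge> 0" "\<And>x. norm (T x) \<le> norm x * K"
    using bounded_linear.nonneg_bounded[OF T] by blast
  have bnd: "(norm (c + T y))^2 \<le> 2 * (norm c)^2 + 2 * K^2 * (norm y)^2" for y
  proof -
    have "(norm (c + T y))^2 \<le> 2 * (norm c)^2 + 2 * (norm (T y))^2" by (rule norm_add_sq)
    also have "(norm (T y))^2 \<le> (norm y * K)^2" by (intro power_mono K(2)) simp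
    finally show ?thesis by (simp add: power_mult_distrib mult_ac)
  qed
  have cont: "continuous_on UNIV (\<lambda>y. (norm (c + T y))^2)"
    by (intro continuous_intros linear_continuous_on T)
  show ?thesis
  proof (rule Bochner_Integration.integrable_bound[of _ "\<lambda>s. 2 * (norm c)^2 + 2 * K^2 * (norm (v s))^2"])
    show "integrable D (\<lambda>s. 2 * (norm c)^2 + 2 * K^2 * (norm (v s))^2)"
      using int by (intro Bochner_Integration.integrable_add integrable_const integrable_mult_right)
    show "(\<lambda>s. (norm (c + T (v s)))^2) \<in> borel_measurable D"
      by (rule borel_measurable_continuous_on[OF cont meas])
    show "AE s in D. norm ((norm (c + T (v s)))^2) \<le> norm (2 * (norm c)^2 + 2 * K^2 * (norm (v s))^2)"
      using bnd by (intro AE_I2) (auto intro: order_trans[OF _ abs_ge_self])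
  qed
qed

lemma outer_cont: "continuous_on UNIV (\<lambda>y::real^'n. outer y y)"
  unfolding outer_def by (intro continuous_on_vec_lambda continuous_intros)

lemma outer_norm: "norm (outer u u) \<le> real CARD('n) * (norm (u::real^'n))^2"
proof -
  have "norm (outer u u) \<le> (\<Sum>i\<in>UNIV. \<bar>norm (outer u u $ i)\<bar>)" unfolding norm_vec_def by (rule L2_set_le_sum_abs)
  also have "\<dots> = (\<Sum>i\<in>UNIV. \<bar>u $ i\<bar> * norm u)"
  proof (intro sum.cong refl)
    fix i
    have "outer u u $ i = (u $ i) *\<^sub>R u" by (simp add: outer_def vec_eq_iff)
    then show "\<bar>norm (outer u u $ i)\<bar> = \<bar>u $ i\<bar> * norm u" by simp
  qed
  also have "\<dots> \<le> (\<Sum>i\<in>(UNIV::'n set). norm u * norm u)"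
    by (intro sum_mono mult_right_mono component_le_norm_cart) simp
  finally show ?thesis by (simp add: power2_eq_square)
qed

lemma wnorm_eq:
  fixes M :: "real^'n^'d" and X :: "real^'n^'n"
  shows "wnorm_sq M X = (\<Sum>a\<in>UNIV. (M $ a) \<bullet> (matrix_inv X *v (M $ a)))"
  unfolding wnorm_sq_def trace_def
  apply (simp add: matrix_matrix_mult_def transpose_def inner_vec_def matrix_vector_mult_def
      sum_distrib_left sum_distrib_right mult_ac)
  apply (rule sum.cong[OF refl])
  apply (subst sum.swap)
  apply (simp add: mult_ac)
  done

lemma mv_row: "(M *v u) $ a = (M $ a) \<bullet> (u :: real^'n)"
  by (simp add: matrix_vector_mult_def inner_vec_def)

lemma norm_sq_rows: "(norm (M *v u))^2 = (\<Sum>a\<in>UNIV. ((M $ a) \<bullet> (u :: real^'n))^2)"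
  unfolding power2_norm_eq_inner by (simp add: inner_vec_def mv_row power2_eq_square)

lemma grad_zero:
  fixes fs :: "'n::finite \<Rightarrow> real^'d \<Rightarrow> real"
  assumes grad: "\<And>i y. (fs i has_derivative (\<lambda>h. gradf i y \<bullet> h)) (at y)"
    and min: "\<And>y. favg fs xstar \<le> favg fs y"
  shows "jac gradf xstar *v ones = 0"
proof -
  define g where "g = (\<Sum>i\<in>UNIV. gradf i xstar)"
  have "((\<lambda>y. \<Sum>i\<in>UNIV. fs i y) has_derivative (\<lambda>h. \<Sum>i\<in>UNIV. gradf i xstar \<bullet> h)) (at xstar)"
    by (intro has_derivative_sum grad)
  then have "((\<lambda>y. (\<Sum>i\<in>UNIV. fs i y) * inverse (real CARD('n))) has_derivative (\<lambda>h. (\<Sum>i\<in>UNIV. gradf i xstar \<bullet> h) * inverse (real CARD('n)))) (at xstar)"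
    by (rule has_derivative_mult_left)
  then have "(favg fs has_derivative (\<lambda>h. (\<Sum>i\<in>UNIV. gradf i xstar \<bullet> h) / real CARD('n))) (at xstar)"
    unfolding favg_def divide_inverse .
  from differential_zero_maxmin[OF UNIV_I open_UNIV this] min
  have "(\<lambda>h. (\<Sum>i\<in>UNIV. gradf i xstar \<bullet> h) / real CARD('n)) = (\<lambda>v. 0)" by blast
  then have "(\<Sum>i\<in>UNIV. gradf i xstar \<bullet> g) / real CARD('n) = 0" by metis
  then have "g \<bullet> g = 0" unfolding g_def by (simp add: inner_sum_left)
  then have g0: "g = 0" by simp
  show ?thesis
    using g0 by (simp add: vec_eq_iff matrix_vector_mult_def jac_def ones_def g_def sum_component)
qed

lemma quad_bound:
  fixes W C :: "real^'n^'n"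
  assumes W: "pos_def W" and C: "transpose C = C"
  shows "m \<bullet> (C *v m) \<le> lambda_max (mat_sqrt W ** C ** mat_sqrt W) * (m \<bullet> (matrix_inv W *v m))"
proof -
  define R where "R = mat_sqrt W"
  have sR: "transpose R = R" and RR: "R ** R = W" using mat_sqrt_props[OF W] R_def by auto
  have Winj: "W *v x = 0 \<Longrightarrow> x = 0" for x
    using W unfolding pos_def_def by (metis inner_zero_right less_irrefl)
  then have "invertible W" unfolding invertible_left_inverse matrix_left_invertible_ker by blast
  then have WW: "W ** matrix_inv W = mat 1" unfolding invertible_def matrix_inv_def by (rule someI_ex[THEN conjunct1])
  have Rinj: "R *v x = 0 \<Longrightarrow> x = 0" for x
    using Winj[of x] RR by (metis matrix_vector_mul_assoc matrix_vector_mult_0_right)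
  then obtain Ri where "Ri ** R = mat 1" using matrix_left_invertible_ker by blast
  then have RRi: "R ** Ri = mat 1" using matrix_left_right_inverse by blast
  define y where "y = Ri *v m"
  have Ry: "R *v y = m" unfolding y_def by (simp add: matrix_vector_mul_assoc RRi)
  define B where "B = R ** C ** R"
  have sB: "transpose B = B" unfolding B_def by (simp add: matrix_transpose_mul sR C matrix_mul_assoc)
  have "m \<bullet> (C *v m) = (R *v y) \<bullet> (C *v (R *v y))" using Ry by simp
  also have "\<dots> = y \<bullet> (R *v (C *v (R *v y)))" using sym_dot[OF sR] by simp
  also have "\<dots> = y \<bullet> (B *v y)" unfolding B_def by (simp add: matrix_vector_mul_assoc matrix_mul_assoc)
  also have "\<dots> \<le> lambda_max B * (y \<bullet> y)" by (rule lmax_bound[OF sB])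
  also have "y \<bullet> y = m \<bullet> (matrix_inv W *v m)"
  proof -
    define z where "z = matrix_inv W *v m"
    have "R *v (R *v z) = m" unfolding z_def by (simp add: matrix_vector_mul_assoc matrix_mul_assoc RR WW)
    then have "R *v (R *v z - y) = 0" using Ry by (simp add: matrix_vector_mult_diff_distrib)
    then have "R *v z - y = 0" by (rule Rinj)
    then have Rz: "R *v z = y" by simp
    have "m \<bullet> z = (R *v y) \<bullet> z" using Ry by simp
    also have "\<dots> = y \<bullet> (R *v z)" using sym_dot[OF sR] by simp
    finally show ?thesis using Rz z_def by simp
  qed
  finally show ?thesis unfolding B_def R_def .
qed

lemma blin_sm: "bounded_linear (\<lambda>y. c *\<^sub>R ((P::real^'n^'d) *v y))"
  by (rule bounded_linear_compose[OF bounded_linear_scaleR_right matrix_vector_mul_bounded_linear])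

theorem lemma3p10:
  fixes fs :: "'n::finite \<Rightarrow> real^'d \<Rightarrow> real"
    and gradf :: "'n \<Rightarrow> real^'d \<Rightarrow> real^'d"
    and xstar x :: "real^'d"
    and W :: "real^'n^'n"
    and D :: "'s measure"
    and S :: "'s \<Rightarrow> real^'q::finite^'n"
    and \<theta> :: "'s \<Rightarrow> real"
    and L1 :: real
    and J :: "real^'n^'d"
  assumes grad: "\<And>i y. (fs i has_derivative (\<lambda>h. gradf i y \<bullet> h)) (at y)"
    and min: "\<And>y. favg fs xstar \<le> favg fs y"
    and W: "pos_def W"
    and D: "prob_space D"
    and meas: "(\<lambda>s. \<theta> s *\<^sub>R (sketch_proj W (S s) *v ones)) \<in> borel_measurable D"
    and integ: "integrable D (\<lambda>s. (norm (\<theta> s *\<^sub>R (sketch_proj W (S s) *v ones)))\<^sup>2)"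
    and unbiased: "(\<integral>s. \<theta> s *\<^sub>R (sketch_proj W (S s) *v ones) \<partial>D) = ones"
    and L1pos: "L1 > 0"
    and L1: "\<And>y. (\<integral>s. (norm (grad_sketch gradf W (\<theta> s) (S s) y
                                - grad_sketch gradf W (\<theta> s) (S s) xstar))\<^sup>2 \<partial>D)
                \<le> 2 * L1 * (favg fs y - favg fs xstar)"
  shows "(\<integral>s. (norm ((1 / real CARD('n)) *\<^sub>R (J *v ones)
              + (\<theta> s / real CARD('n)) *\<^sub>R ((jac gradf x - J) *v (sketch_proj W (S s) *v ones))))\<^sup>2 \<partial>D)
         \<le> 4 * L1 * (favg fs x - favg fs xstar)
           + 2 * rho D W \<theta> S / (real CARD('n))\<^sup>2 * wnorm_sq (J - jac gradf xstar) W"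
proof -
  interpret P: prob_space D by (rule D)
  define n where "n = real CARD('n)"
  have npos: "n > 0" unfolding n_def by simp
  define v where "v = (\<lambda>s. \<theta> s *\<^sub>R (sketch_proj W (S s) *v ones))"
  have mv: "v \<in> borel_measurable D" using meas unfolding v_def .
  have iv2: "integrable D (\<lambda>s. (norm (v s))\<^sup>2)" using integ unfolding v_def .
  have Ev: "integral\<^sup>L D v = ones" using unbiased unfolding v_def .
  have ones0: "(ones :: real^'n) \<noteq> 0" by (simp add: ones_def vec_eq_iff)
  have iv: "integrable D v"
  proof (rule ccontr)
    assume "\<not> integrable D v"
    then have "integral\<^sup>L D v = 0" by (rule not_integrable_integral_eq)
    then show False using Ev ones0 by simp
  qed
  define G where "G = jac gradf x"
  define Gs where "Gs = jac gradf xstar"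
  define M where "M = J - Gs"
  have Gs0: "Gs *v ones = 0" unfolding Gs_def by (rule grad_zero[OF grad min])
  define a where "a = (\<lambda>s. (1/n) *\<^sub>R ((G - Gs) *v v s))"
  define b where "b = (\<lambda>s. (1/n) *\<^sub>R (M *v ones) + (- 1/n) *\<^sub>R (M *v v s))"
  have split: "(1 / n) *\<^sub>R (J *v ones) + (\<theta> s / n) *\<^sub>R ((G - J) *v (sketch_proj W (S s) *v ones))
      = a s + b s" for s
  proof -
    have "(\<theta> s / n) *\<^sub>R ((G - J) *v (sketch_proj W (S s) *v ones)) = (1/n) *\<^sub>R ((G - J) *v v s)"
      unfolding v_def by (simp add: matrix_vector_mult_scaleR)
    moreover have "a s + b s = (1/n) *\<^sub>R (J *v ones) + (1/n) *\<^sub>R ((G - J) *v v s)"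
      unfolding a_def b_def M_def using Gs0
      by (simp add: matrix_vector_mult_diff_rdistrib algebra_simps)
    ultimately show ?thesis by simp
  qed
  have ia: "integrable D (\<lambda>s. (norm (a s))\<^sup>2)"
    using int_sq[OF D mv iv2 blin_sm, of 0 "1/n" "G - Gs"] unfolding a_def by simp
  have ib: "integrable D (\<lambda>s. (norm (b s))\<^sup>2)"
    using int_sq[OF D mv iv2 blin_sm, of "(1/n) *\<^sub>R (M *v ones)" "-1/n" M] unfolding b_def by simp
  have iab: "integrable D (\<lambda>s. (norm (a s + b s))\<^sup>2)"
    using int_sq[OF D mv iv2 blin_sm, of "(1/n) *\<^sub>R (J *v ones)" "1/n" "G - J"]
    unfolding split[symmetric] v_def by (simp add: matrix_vector_mult_scaleR)
  have "(\<integral>s. (norm ((1 / n) *\<^sub>R (J *v ones) + (\<theta> s / n) *\<^sub>R ((G - J) *v (sketch_proj W (S s) *v ones))))\<^sup>2 \<partial>D)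
      = (\<integral>s. (norm (a s + b s))\<^sup>2 \<partial>D)" unfolding split ..
  also have "\<dots> \<le> (\<integral>s. 2 * (norm (a s))\<^sup>2 + 2 * (norm (b s))\<^sup>2 \<partial>D)"
    using iab ia ib by (intro integral_mono norm_add_sq) auto
  also have "\<dots> = 2 * (\<integral>s. (norm (a s))\<^sup>2 \<partial>D) + 2 * (\<integral>s. (norm (b s))\<^sup>2 \<partial>D)"
    using ia ib by simp
  also have "(\<integral>s. (norm (a s))\<^sup>2 \<partial>D) \<le> 2 * L1 * (favg fs x - favg fs xstar)"
  proof -
    have "grad_sketch gradf W (\<theta> s) (S s) x - grad_sketch gradf W (\<theta> s) (S s) xstar = a s" for s
      unfolding grad_sketch_def a_def v_def G_def Gs_def n_def
      by (simp add: matrix_vector_mult_scaleR matrix_vector_mult_diff_rdistrib algebra_simps)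
    then show ?thesis using L1[of x] by simp
  qed
  also have "(\<integral>s. (norm (b s))\<^sup>2 \<partial>D) \<le> rho D W \<theta> S / n\<^sup>2 * wnorm_sq M W"
  proof -
    define C' where "C' = (\<integral>s. outer (v s) (v s) \<partial>D)"
    define C where "C = C' - outer ones ones"
    have rho_eq: "rho D W \<theta> S = lambda_max (mat_sqrt W ** C ** mat_sqrt W)"
      unfolding rho_def C_def C'_def v_def ..
    have iout: "integrable D (\<lambda>s. outer (v s) (v s))"
    proof (rule Bochner_Integration.integrable_bound[of _ "\<lambda>s. n * (norm (v s))\<^sup>2"])
      show "integrable D (\<lambda>s. n * (norm (v s))\<^sup>2)" using iv2 by simp
      show "(\<lambda>s. outer (v s) (v s)) \<in> borel_measurable D"
        by (rule borel_measurable_continuous_on[OF outer_cont mv])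
      show "AE s in D. norm (outer (v s) (v s)) \<le> norm (n * (norm (v s))\<^sup>2)"
        using outer_norm unfolding n_def by (intro AE_I2) (auto intro: order_trans[OF _ abs_ge_self])
    qed
    have C'c: "C' $ i $ j = (\<integral>s. v s $ i * v s $ j \<partial>D)" for i j
    proof -
      have "(\<integral>s. outer (v s) (v s) $ i $ j \<partial>D) = C' $ i $ j"
        unfolding C'_def
        by (rule int_blin[OF bounded_linear_compose[OF bounded_linear_vec_nth bounded_linear_vec_nth] iout])
      then show ?thesis by (simp add: outer_def)
    qed
    have symC: "transpose C = C"
      unfolding C_def by (simp add: vec_eq_iff transpose_def C'c outer_def mult.commute)
    have row: "(\<integral>s. (m \<bullet> (ones - v s))\<^sup>2 \<partial>D) = m \<bullet> (C *v m)" for m :: "real^'n"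
    proof -
      have im: "integrable D (\<lambda>s. m \<bullet> v s)"
        by (rule integrable_bounded_linear[OF bounded_linear_inner_right iv])
      have Em: "(\<integral>s. m \<bullet> v s \<partial>D) = m \<bullet> ones"
        using int_blin[OF bounded_linear_inner_right iv] Ev by simp
      have outer_mv: "outer u u *v m = (u \<bullet> m) *\<^sub>R u" for u :: "real^'n"
        by (simp add: vec_eq_iff matrix_vector_mult_def outer_def inner_vec_def sum_distrib_left mult_ac)
      have blT: "bounded_linear (\<lambda>X::real^'n^'n. m \<bullet> (X *v m))"
      proof -
        have "linear (\<lambda>X::real^'n^'n. X *v m)"
          by (rule linearI) (simp_all add: matrix_vector_mult_add_rdistrib scaleR_matrix_vector_assoc[symmetric])
        then have "bounded_linear (\<lambda>X::real^'n^'n. X *v m)" by (simp add: linear_conv_bounded_linear)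
        then show ?thesis by (rule bounded_linear_compose[OF bounded_linear_inner_right])
      qed
      have im2: "integrable D (\<lambda>s. (m \<bullet> v s)\<^sup>2)"
        using integrable_bounded_linear[OF blT iout] by (simp add: outer_mv inner_commute power2_eq_square)
      have E2: "(\<integral>s. (m \<bullet> v s)\<^sup>2 \<partial>D) = m \<bullet> (C' *v m)"
        using int_blin[OF blT iout] unfolding C'_def[symmetric]
        by (simp add: outer_mv inner_commute power2_eq_square)
      have "(\<lambda>s. (m \<bullet> (ones - v s))\<^sup>2) = (\<lambda>s. (m \<bullet> ones)\<^sup>2 - 2 * (m \<bullet> ones) * (m \<bullet> v s) + (m \<bullet> v s)\<^sup>2)"
        by (simp add: inner_diff_right power2_eq_square algebra_simps)
      then have "(\<integral>s. (m \<bullet> (ones - v s))\<^sup>2 \<partial>D) = (m \<bullet> ones)\<^sup>2 - 2 * (m \<bullet> ones) * (m \<bullet> ones) + m \<bullet> (C' *v m)"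
        using im im2 Em E2 P.prob_space by simp
      also have "\<dots> = m \<bullet> (C *v m)"
        unfolding C_def by (simp add: matrix_vector_mult_diff_rdistrib inner_diff_right outer_mv inner_commute power2_eq_square)
      finally show ?thesis .
    qed
    have irow: "integrable D (\<lambda>s. (M $ r \<bullet> (ones - v s))\<^sup>2)" for r
      using int_sq[OF D mv iv2 bounded_linear_compose[OF bounded_linear_minus[OF bounded_linear_ident] bounded_linear_inner_right[of "M $ r"]], of "M $ r \<bullet> ones"]
      by (simp add: inner_diff_right)
    have bnorm: "(norm (b s))\<^sup>2 = (1/n)\<^sup>2 * (\<Sum>r\<in>UNIV. (M $ r \<bullet> (ones - v s))\<^sup>2)" for s
    proof -
      have "b s = (1/n) *\<^sub>R (M *v (ones - v s))" unfolding b_def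
        by (simp add: matrix_vector_mult_diff_distrib algebra_simps)
      then show ?thesis using npos by (simp add: norm_sq_rows[symmetric] power_divide)
    qed
    have "(\<integral>s. (norm (b s))\<^sup>2 \<partial>D) = (1/n)\<^sup>2 * (\<Sum>r\<in>UNIV. M $ r \<bullet> (C *v M $ r))"
      unfolding bnorm using irow by (simp add: Bochner_Integration.integral_sum row)
    also have "\<dots> \<le> (1/n)\<^sup>2 * (\<Sum>r\<in>UNIV. lambda_max (mat_sqrt W ** C ** mat_sqrt W) * (M $ r \<bullet> (matrix_inv W *v M $ r)))"
      by (intro mult_left_mono sum_mono quad_bound[OF W symC]) simp
    also have "\<dots> = rho D W \<theta> S / n\<^sup>2 * wnorm_sq M W"
      unfolding rho_eq wnorm_eq by (simp add: sum_distrib_left power_divide)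
    finally show ?thesis .
  qed
  finally show ?thesis unfolding n_def G_def Gs_def M_def by (simp add: algebra_simps)
qed

end
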